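(* Let $[\Lambda,m,m-1,\beta]$ be a minimax stratum in $\mathrm{A}=\mathrm{M}_n(\mathrm{F})$, with $\mathrm{E}=\mathrm{F}[\beta]$ of degree $n$ and ramification index $e=e(\mathrm{E}/\mathrm{F})$, and write all matrices with respect to the companion basis $\{1,\beta,\dots,\beta^{n-1}\}$ of $\mathrm{E}\cong\mathrm{F}^n$. Then the character $\psi_\beta$ of $\mathrm{U}^{\lfloor m/2\rfloor+1}(\Lambda)$ is trivial on $$\mathrm{U}^{\lfloor m/2\rfloor+1}(\Lambda)\cap\Sigma_n\mathrm{K}_n\big(n(1+m/e)\big)\Sigma_n^{-1}.$$
   Context: $\mathrm{F}$ non-archimedean local field, $\mathfrak{o}_\mathrm{F}$, $\mathfrak{p}_\mathrm{F}=\varpi_\mathrm{F}\mathfrak{o}_\mathrm{F}$, valuation $\nu_\mathrm{F}$. $\mathrm{R}$ algebraically closed of characteristic $\ell\neq p$; $\psi:\mathrm{F}\to\mathrm{R}^\times$ is a character trivial on $\mathfrak{p}_\mathrm{F}$ but not on $\mathfrak{o}_\mathrm{F}$. $\mathrm{K}_n=\mathrm{GL}_n(\mathfrak{o}_\mathrm{F})$, $\mathrm{K}_n(N)=\{\left(\begin{smallmatrix}a&b\\c&d\end{smallmatrix}\right)\in\mathrm{K}_n: c\in\mathrm{M}_{1\times(n-1)}(\mathfrak{p}_\mathrm{F}^N),\ d\in1+\mathfrak{p}_\mathrm{F}^N\}$, $\Sigma_n=\mathrm{diag}(\varpi_\mathrm{F}^{n-1},\dots,\varpi_\mathrm{F},1)$.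 Lattice chains: a lattice chain is a strictly decreasing periodic sequence $(\Lambda(i))_{i\in\mathbb{Z}}$ of $\mathfrak{o}_\mathrm{F}$-lattices in $\mathrm{F}^n$ with $\Lambda(i+e(\Lambda))=\mathfrak{p}_\mathrm{F}\Lambda(i)$; $\mathfrak{A}_r(\Lambda)=\{x\in\mathrm{A}:x\Lambda(i)\subseteq\Lambda(i+r)\ \forall i\}$, $\mathrm{U}^r(\Lambda)=1+\mathfrak{A}_r(\Lambda)$ for $r\geqslant1$. For $\beta\in\mathrm{A}$, $\psi_\beta(x)=\psi(\mathrm{Tr}(\beta(x-1)))$. Minimax stratum $[\Lambda,m,m-1,\beta]$: $m\geqslant1$ an integer, $\beta\in\mathrm{A}$ such that $\mathrm{E}=\mathrm{F}[\beta]$ is a field of degree $n$ over $\mathrm{F}$ with $\nu_\mathrm{E}(\beta)=-m$, $\gcd(m,e)=1$, and $\varpi_\mathrm{F}^m\beta^e+\mathfrak{p}_\mathrm{E}$ generates the residue field extension $k_\mathrm{E}/k_\mathrm{F}$; and $\Lambda(i)=\mathfrak{p}_\mathrm{E}^i$ under the identification $\mathrm{E}\cong\mathrm{F}^n$ given by the basis $\{1,\beta,\dots,\beta^{n-1}\}$ (so $e(\Lambda)=e$). In this basis $\beta$ is the companion matrix of its minimal polynomial $X^n+a_{n-1}X^{n-1}+\dots+a_0$: entries $1$ at positions $(i+1,i)$ and $-a_{i-1}$ at $(i,n)$; one has $\nu_\mathrm{F}(a_0)=-mn/e$ and $\nu_\mathrm{F}(a_i)\geqslant-m(n-i)/e$.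 *)

theory Defs
  imports "Jordan_Normal_Form.Determinant" "HOL-Computational_Algebra.Polynomial_Factorial"
begin

text \<open>v is the normalised valuation nu_F, only meaningful on nonzero elements;
  unif is a uniformiser. "val_ge v x k" means x lies in p_F^k (x = 0 allowed).\<close>

definition val_ge :: "('a::field \<Rightarrow> int) \<Rightarrow> 'a \<Rightarrow> int \<Rightarrow> bool" where
  "val_ge v x k \<longleftrightarrow> x = 0 \<or> k \<le> v x"

definition discrete_valuation :: "('a::field \<Rightarrow> int) \<Rightarrow> 'a \<Rightarrow> bool" where
  "discrete_valuation v unif \<longleftrightarrow> unif \<noteq> 0 \<and> v unif = 1 \<and>
     (\<forall>x y. x \<noteq> 0 \<longrightarrow> y \<noteq> 0 \<longrightarrow> v (x * y) = v x + v y) \<and>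
     (\<forall>x y. x \<noteq> 0 \<longrightarrow> y \<noteq> 0 \<longrightarrow> x + y \<noteq> 0 \<longrightarrow> min (v x) (v y) \<le> v (x + y))"

definition val_complete :: "('a::field \<Rightarrow> int) \<Rightarrow> bool" where
  "val_complete v \<longleftrightarrow>
     (\<forall>X :: nat \<Rightarrow> 'a. (\<forall>k. \<exists>N. \<forall>i\<ge>N. \<forall>j\<ge>N. val_ge v (X i - X j) k) \<longrightarrow>
        (\<exists>L. \<forall>k. \<exists>N. \<forall>i\<ge>N. val_ge v (X i - L) k))"

definition finite_residue_field :: "('a::field \<Rightarrow> int) \<Rightarrow> bool" where
  "finite_residue_field v \<longleftrightarrow>
     (\<exists>S. finite S \<and> (\<forall>x. val_ge v x 0 \<longrightarrow> (\<exists>s\<in>S. val_ge v s 0 \<and> val_ge v (x - s) 1)))"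

definition nonarch_local_field :: "('a::field \<Rightarrow> int) \<Rightarrow> 'a \<Rightarrow> bool" where
  "nonarch_local_field v unif \<longleftrightarrow> discrete_valuation v unif \<and> val_complete v \<and> finite_residue_field v"

definition residue_char :: "('a::field \<Rightarrow> int) \<Rightarrow> nat \<Rightarrow> bool" where
  "residue_char v p \<longleftrightarrow> prime p \<and> val_ge v (of_nat p) 1"

definition alg_closed :: "'c::field itself \<Rightarrow> bool" where
  "alg_closed _ \<longleftrightarrow> (\<forall>q :: 'c poly. 0 < degree q \<longrightarrow> (\<exists>x. poly q x = 0))"

definition level_one_char :: "('a::field \<Rightarrow> int) \<Rightarrow> ('a \<Rightarrow> 'c::field) \<Rightarrow> bool" where
  "level_one_char v psi \<longleftrightarrow> (\<forall>x. psi x \<noteq> 0) \<and> (\<forall>x y. psi (x + y) = psi x * psi y) \<and>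
     (\<forall>x. val_ge v x 1 \<longrightarrow> psi x = 1) \<and> (\<exists>x. val_ge v x 0 \<and> psi x \<noteq> 1)"

definition mat_trace :: "'a::comm_ring_1 mat \<Rightarrow> 'a" where
  "mat_trace A = (\<Sum>i<dim_row A. A $$ (i, i))"

text \<open>Companion matrix of X^n + a_(n-1) X^(n-1) + ... + a_0: entries 1 at (i+1,i) and
  -a_(i-1) at (i,n) (1-indexed), i.e. 1 at (i+1,i) and -a_i at (i,n-1) (0-indexed).\<close>
definition companion :: "nat \<Rightarrow> (nat \<Rightarrow> 'a::comm_ring_1) \<Rightarrow> 'a mat" where
  "companion n a = mat n n (\<lambda>(i, j). if i = j + 1 then 1 else if j = n - 1 then - a i else 0)"

definition char_poly_of :: "nat \<Rightarrow> (nat \<Rightarrow> 'a::comm_ring_1) \<Rightarrow> 'a poly" where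
  "char_poly_of n a = monom 1 n + (\<Sum>i<n. monom (a i) i)"

definition poly_at :: "nat \<Rightarrow> nat \<Rightarrow> (nat \<Rightarrow> 'a::comm_ring_1) \<Rightarrow> 'a mat \<Rightarrow> 'a mat" where
  "poly_at n d c B = mat n n (\<lambda>(i, k). \<Sum>j<d. c j * (B ^\<^sub>m j) $$ (i, k))"

definition field_E :: "nat \<Rightarrow> 'a::comm_ring_1 mat \<Rightarrow> 'a mat set" where
  "field_E n B = {poly_at n n c B | c. True}"

text \<open>For x in E (F complete) the unique extension of nu_F to E satisfies
  nu_F(det x) = nu_F(N_(E/F) x) = f(E/F) nu_E(x). Hence f(E/F) is the least positive value
  of nu_F o det on E^x, e(E/F) = n / f(E/F), and nu_E(x) = nu_F(det x) / f(E/F).\<close>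
definition res_deg :: "('a::field \<Rightarrow> int) \<Rightarrow> nat \<Rightarrow> 'a mat \<Rightarrow> int" where
  "res_deg v n B = (LEAST k. 0 < k \<and> (\<exists>x\<in>field_E n B. x \<noteq> 0\<^sub>m n n \<and> v (det x) = k))"

definition ram_index :: "('a::field \<Rightarrow> int) \<Rightarrow> nat \<Rightarrow> 'a mat \<Rightarrow> nat" where
  "ram_index v n B = nat (int n div res_deg v n B)"

definition val_E :: "('a::field \<Rightarrow> int) \<Rightarrow> nat \<Rightarrow> 'a mat \<Rightarrow> 'a mat \<Rightarrow> int" where
  "val_E v n B x = v (det x) div res_deg v n B"

definition val_E_ge :: "('a::field \<Rightarrow> int) \<Rightarrow> nat \<Rightarrow> 'a mat \<Rightarrow> 'a mat \<Rightarrow> int \<Rightarrow> bool" where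
  "val_E_ge v n B x k \<longleftrightarrow> x = 0\<^sub>m n n \<or> k \<le> val_E v n B x"

text \<open>varpi^m beta^e + p_E generates k_E over k_F: every element of o_E is congruent mod p_E
  to a polynomial with o_F coefficients in y.\<close>
definition residue_generates :: "('a::field \<Rightarrow> int) \<Rightarrow> nat \<Rightarrow> 'a mat \<Rightarrow> 'a mat \<Rightarrow> bool" where
  "residue_generates v n B y \<longleftrightarrow>
     (\<forall>z\<in>field_E n B. val_E_ge v n B z 0 \<longrightarrow>
        (\<exists>d c. (\<forall>j. val_ge v (c j) 0) \<and> val_E_ge v n B (z - poly_at n d c y) 1))"

text \<open>Lattice chain Lambda(i) = p_E^i under E = F^n, basis 1, beta, ..., beta^(n-1):
  the vector w corresponds to sum_j w_j beta^j.\<close>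
definition lattice_E :: "('a::field \<Rightarrow> int) \<Rightarrow> nat \<Rightarrow> 'a mat \<Rightarrow> int \<Rightarrow> 'a vec set" where
  "lattice_E v n B i = {w \<in> carrier_vec n. val_E_ge v n B (poly_at n n (\<lambda>j. w $ j) B) i}"

definition hered_A :: "(int \<Rightarrow> 'a::field vec set) \<Rightarrow> nat \<Rightarrow> int \<Rightarrow> 'a mat set" where
  "hered_A Lam n r = {X \<in> carrier_mat n n. \<forall>i. \<forall>w\<in>Lam i. X *\<^sub>v w \<in> Lam (i + r)}"

definition unit_U :: "(int \<Rightarrow> 'a::field vec set) \<Rightarrow> nat \<Rightarrow> nat \<Rightarrow> 'a mat set" where
  "unit_U Lam n r = {1\<^sub>m n + X | X. X \<in> hered_A Lam n (int r)}"

definition GL_O :: "('a::field \<Rightarrow> int) \<Rightarrow> nat \<Rightarrow> 'a mat set" where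
  "GL_O v n = {g \<in> carrier_mat n n. (\<forall>i<n. \<forall>j<n. val_ge v (g $$ (i, j)) 0) \<and>
                  det g \<noteq> 0 \<and> v (det g) = 0}"

definition K_mirabolic :: "('a::field \<Rightarrow> int) \<Rightarrow> nat \<Rightarrow> nat \<Rightarrow> 'a mat set" where
  "K_mirabolic v n N = {g \<in> GL_O v n. (\<forall>j<n - 1. val_ge v (g $$ (n - 1, j)) (int N)) \<and>
                           val_ge v (g $$ (n - 1, n - 1) - 1) (int N)}"

definition Sigma_mat :: "nat \<Rightarrow> 'a::field \<Rightarrow> 'a mat" where
  "Sigma_mat n unif = mat n n (\<lambda>(i, j). if i = j then unif ^ (n - 1 - i) else 0)"

definition Sigma_inv :: "nat \<Rightarrow> 'a::field \<Rightarrow> 'a mat" where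
  "Sigma_inv n unif = mat n n (\<lambda>(i, j). if i = j then inverse unif ^ (n - 1 - i) else 0)"

end

theory Submission
  imports Defs
begin


lemma cutoff_shift: "poly_cutoff s P + monom 1 s * poly_shift s P = (P :: 'b::comm_ring_1 poly)"
  by (rule poly_eqI) (auto simp add: coeff_poly_cutoff coeff_monom_mult coeff_poly_shift)

locale dval =
  fixes v :: "'a::field \<Rightarrow> int" and unif :: 'a
  assumes dv: "discrete_valuation v unif"
begin

lemma vmult: "x \<noteq> 0 \<Longrightarrow> y \<noteq> 0 \<Longrightarrow> v (x * y) = v x + v y"
  using dv unfolding discrete_valuation_def by blast

lemma vadd: "x \<noteq> 0 \<Longrightarrow> y \<noteq> 0 \<Longrightarrow> x + y \<noteq> 0 \<Longrightarrow> min (v x) (v y) \<le> v (x + y)"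
  using dv unfolding discrete_valuation_def by blast

lemma vunif: "unif \<noteq> 0" "v unif = 1"
  using dv unfolding discrete_valuation_def by auto

lemma v1: "v 1 = 0"
  using vmult[of 1 1] by simp

lemma vneg1: "v (-1) = 0"
  using vmult[of "-1" "-1"] v1 by simp

lemma vuminus: "x \<noteq> 0 \<Longrightarrow> v (-x) = v x"
  using vmult[of "-1" x] vneg1 by simp

lemma vinv: "x \<noteq> 0 \<Longrightarrow> v (inverse x) = - v x"
  using vmult[of x "inverse x"] v1 by simp

lemma vpow: "x \<noteq> 0 \<Longrightarrow> v (x ^ k) = int k * v x"
  by (induction k) (auto simp: v1 vmult algebra_simps)

lemma vg_0[simp]: "val_ge v 0 k"
  by (simp add: val_ge_def)

lemma vg_add: "val_ge v x k \<Longrightarrow> val_ge v y k \<Longrightarrow> val_ge v (x + y) k"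
  unfolding val_ge_def using vadd[of x y] by fastforce

lemma vg_uminus[simp]: "val_ge v (-x) k \<longleftrightarrow> val_ge v x k"
  by (cases "x = 0") (auto simp: val_ge_def vuminus)

lemma vg_diff: "val_ge v x k \<Longrightarrow> val_ge v y k \<Longrightarrow> val_ge v (x - y) k"
  using vg_add[of x k "-y"] by simp

lemma vg_mono: "val_ge v x k \<Longrightarrow> l \<le> k \<Longrightarrow> val_ge v x l"
  unfolding val_ge_def by auto

lemma vg_mult: "val_ge v x k \<Longrightarrow> val_ge v y l \<Longrightarrow> val_ge v (x * y) (k + l)"
  by (cases "x = 0"; cases "y = 0") (auto simp: val_ge_def vmult)

lemma vg_sum: "(\<And>i. i \<in> A \<Longrightarrow> val_ge v (f i) k) \<Longrightarrow> val_ge v (sum f A) k"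
proof (induction A rule: infinite_finite_induct)
  case (insert x F)
  then show ?case by (simp add: vg_add)
qed auto

lemma vg_all: assumes "\<And>k. val_ge v x k" shows "x = 0"
proof (rule ccontr)
  assume "x \<noteq> 0"
  moreover have "val_ge v x (v x + 1)" using assms by blast
  ultimately show False by (simp add: val_ge_def)
qed

lemma vg_one: "val_ge v 1 0"
  by (simp add: val_ge_def v1)

lemma vg_sub_trans: "val_ge v (x - y) k \<Longrightarrow> val_ge v (y - z) k \<Longrightarrow> val_ge v (x - z) k"
  using vg_add[of "x - y" k "y - z"] by simp

lemma vg_sym: "val_ge v (x - y) k \<Longrightarrow> val_ge v (y - x) k"
  using vg_uminus[of "x - y" k] by simp

definition pvg :: "'a poly \<Rightarrow> int \<Rightarrow> bool" where
  "pvg P k \<longleftrightarrow> (\<forall>j. val_ge v (coeff P j) k)"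

lemma pvg_0[simp]: "pvg 0 k" by (simp add: pvg_def)
lemma pvg_add: "pvg P k \<Longrightarrow> pvg Q k \<Longrightarrow> pvg (P + Q) k"
  by (simp add: pvg_def vg_add)
lemma pvg_uminus[simp]: "pvg (-P) k \<longleftrightarrow> pvg P k"
  by (simp add: pvg_def)
lemma pvg_diff: "pvg P k \<Longrightarrow> pvg Q k \<Longrightarrow> pvg (P - Q) k"
  by (simp add: pvg_def vg_diff)
lemma pvg_mono: "pvg P k \<Longrightarrow> l \<le> k \<Longrightarrow> pvg P l"
  unfolding pvg_def using vg_mono by blast
lemma pvg_mult: "pvg P k \<Longrightarrow> pvg Q l \<Longrightarrow> pvg (P * Q) (k + l)"
  unfolding pvg_def coeff_mult by (auto intro!: vg_sum vg_mult)
lemma pvg_mult0: "pvg P 0 \<Longrightarrow> pvg Q l \<Longrightarrow> pvg (P * Q) l"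
  using pvg_mult[of P 0 Q l] by simp
lemma pvg_mult0': "pvg P k \<Longrightarrow> pvg Q 0 \<Longrightarrow> pvg (P * Q) k"
  using pvg_mult[of P k Q 0] by simp
lemma pvg_sum: "(\<And>i. i \<in> A \<Longrightarrow> pvg (f i) k) \<Longrightarrow> pvg (sum f A) k"
  unfolding pvg_def coeff_sum by (auto intro!: vg_sum)
lemma pvg_one: "pvg 1 0"
  by (simp add: pvg_def coeff_1 vg_one)
lemma pvg_monom: "val_ge v c k \<Longrightarrow> pvg (monom c s) k"
  by (simp add: pvg_def coeff_monom)
lemma pvg_X: "pvg [:0,1:] 0"
  by (simp add: pvg_def coeff_pCons split: nat.splits) (simp add: vg_one)
lemma pvg_power: "pvg P 0 \<Longrightarrow> pvg (P ^ j) 0"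
  by (induction j) (auto simp: pvg_one pvg_mult0)
lemma pvg_cutoff: "pvg P k \<Longrightarrow> pvg (poly_cutoff s P) k"
  by (simp add: pvg_def coeff_poly_cutoff)
lemma pvg_shift: "pvg P k \<Longrightarrow> pvg (poly_shift s P) k"
  by (simp add: pvg_def coeff_poly_shift)
lemma pvg_all: "(\<And>k. pvg P k) \<Longrightarrow> P = 0"
  unfolding pvg_def by (metis vg_all poly_eqI coeff_0)


end



locale dvalc = dval +
  assumes comp: "val_complete v"
begin

lemma poly_limit:
  fixes P :: "nat \<Rightarrow> 'a poly"
  assumes step: "\<And>k. pvg (P (Suc k) - P k) (int k + 1)"
      and deg: "\<And>k. degree (P k) \<le> d"
  shows "\<exists>Q. degree Q \<le> d \<and> (\<forall>k. pvg (Q - P k) (int k + 1))"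
proof -
  have tele: "pvg (P i - P K) (int K + 1)" if "K \<le> i" for i K
    using that
  proof (induction i rule: dec_induct)
    case base then show ?case by simp
  next
    case (step i)
    have "P (Suc i) - P K = (P (Suc i) - P i) + (P i - P K)" by simp
    moreover have "pvg (P (Suc i) - P i) (int K + 1)"
      using assms(1)[of i] step.hyps by (auto intro: pvg_mono)
    ultimately show ?case using step.IH by (metis pvg_add)
  qed
  have "\<exists>L. \<forall>k. \<exists>N. \<forall>i\<ge>N. val_ge v (coeff (P i) j - L) k" for j
  proof -
    have "\<forall>k. \<exists>N. \<forall>i\<ge>N. \<forall>i'\<ge>N. val_ge v (coeff (P i) j - coeff (P i') j) k"
    proof
      fix k :: int
      show "\<exists>N. \<forall>i\<ge>N. \<forall>i'\<ge>N. val_ge v (coeff (P i) j - coeff (P i') j) k"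
      proof (intro exI allI impI)
        fix i i' assume "nat k \<le> i" "nat k \<le> i'"
        then have a: "val_ge v (coeff (P i - P (nat k)) j) (int (nat k) + 1)"
          and b: "val_ge v (coeff (P i' - P (nat k)) j) (int (nat k) + 1)"
          using tele unfolding pvg_def by blast+
        have "val_ge v (coeff (P i) j - coeff (P i') j) (int (nat k) + 1)"
          using vg_diff[OF a b] by simp
        then show "val_ge v (coeff (P i) j - coeff (P i') j) k"
          by (rule vg_mono) simp
      qed
    qed
    then show ?thesis
      using comp[unfolded val_complete_def, rule_format, of "\<lambda>i. coeff (P i) j"] by simp
  qed
  then obtain L where L: "\<And>j k. \<exists>N. \<forall>i\<ge>N. val_ge v (coeff (P i) j - L j) k"
    by metis
  define Q where "Q = (\<Sum>j\<le>d. monom (L j) j)"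
  have cQ: "coeff Q j = (if j \<le> d then L j else 0)" for j
    unfolding Q_def coeff_sum coeff_monom by (simp add: sum.delta)
  have "degree Q \<le> d"
    by (rule degree_le) (simp add: cQ)
  moreover have "pvg (Q - P k) (int k + 1)" for k
    unfolding pvg_def
  proof
    fix j
    show "val_ge v (coeff (Q - P k) j) (int k + 1)"
    proof (cases "j \<le> d")
      case True
      obtain N where N: "\<forall>i\<ge>N. val_ge v (coeff (P i) j - L j) (int k + 1)"
        using L by blast
      define i where "i = max N k"
      have a: "val_ge v (coeff (P i) j - L j) (int k + 1)" using N i_def by simp
      have b: "val_ge v (coeff (P i) j - coeff (P k) j) (int k + 1)"
        using tele[of k i] i_def unfolding pvg_def by simp
      have "val_ge v ((coeff (P i) j - coeff (P k) j) - (coeff (P i) j - L j)) (int k + 1)"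
        using vg_diff[OF b a] .
      then show ?thesis using True by (simp add: cQ)
    next
      case False
      then have "coeff (P k) j = 0" using deg[of k] by (simp add: coeff_eq_0)
      then show ?thesis using False by (simp add: cQ)
    qed
  qed
  ultimately show ?thesis by blast
qed

lemma hensel:
  fixes g B0 U V :: "'a poly"
  assumes g0: "pvg g 0" and dg: "degree g \<le> n" and sn: "s \<le> n"
    and B00: "pvg B0 0" and dB0: "degree B0 \<le> n - s"
    and U0: "pvg U 0" and V0: "pvg V 0" and bez: "monom 1 s * U + B0 * V = 1"
    and err: "pvg (g - monom 1 s * B0) 1"
  shows "\<exists>A B. g = A * B \<and> degree A = s"
proof -
  define m :: "'a poly" where "m = monom 1 s"
  have m0: "pvg m 0" unfolding m_def by (rule pvg_monom) (rule vg_one)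
  define step where "step = (\<lambda>(A, B). let E = g - A * B; W = V * E in
      (A + poly_cutoff s W, B + U * E + poly_shift s W * B0))"
  define Inv where "Inv = (\<lambda>k (A, B). pvg (A - m) 1 \<and> pvg (B - B0) 1 \<and> pvg (g - A * B) (int k + 1)
      \<and> (\<forall>j\<ge>s. coeff A j = coeff m j) \<and> degree (B :: 'a poly) \<le> n - s)"
  have stepI: "Inv (Suc k) (step (A, B)) \<and> pvg (fst (step (A, B)) - A) (int k + 1)
      \<and> pvg (snd (step (A, B)) - B) (int k + 1)" if I: "Inv k (A, B)" for k A B
  proof -
    define E where "E = g - A * B"
    define W where "W = V * E"
    define R where "R = poly_cutoff s W"
    define Q where "Q = poly_shift s W"
    define dB where "dB = U * E + Q * B0"
    have st: "step (A, B) = (A + R, B + dB)"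
      unfolding step_def R_def Q_def dB_def W_def E_def by (simp add: Let_def)
    have IA: "pvg (A - m) 1" and IB: "pvg (B - B0) 1" and IE: "pvg E (int k + 1)"
      and IcA: "\<forall>j\<ge>s. coeff A j = coeff m j" and IdB: "degree B \<le> n - s"
      using I unfolding Inv_def E_def by auto
    have pW: "pvg W (int k + 1)" unfolding W_def using pvg_mult0[OF V0 IE] .
    have pR: "pvg R (int k + 1)" unfolding R_def by (rule pvg_cutoff[OF pW])
    have pQ: "pvg Q (int k + 1)" unfolding Q_def by (rule pvg_shift[OF pW])
    have pdB: "pvg dB (int k + 1)" unfolding dB_def
      using pvg_add[OF pvg_mult0[OF U0 IE] pvg_mult0'[OF pQ B00]] by simp
    have cs: "R + m * Q = W" unfolding R_def Q_def m_def by (rule cutoff_shift)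
    have key: "m * dB + B0 * R = E"
    proof -
      have "m * dB + B0 * R = m * U * E + B0 * (R + m * Q)"
        unfolding dB_def by (simp add: algebra_simps)
      also have "\<dots> = (m * U + B0 * V) * E" unfolding cs W_def by (simp add: algebra_simps)
      also have "\<dots> = E" using bez m_def by simp
      finally show ?thesis .
    qed
    have newerr: "g - (A + R) * (B + dB) = - ((A - m) * dB + R * (B - B0) + R * dB)"
    proof -
      have "g - (A + R) * (B + dB) = E - A * dB - R * B - R * dB"
        unfolding E_def by (simp add: algebra_simps)
      also have "\<dots> = (m * dB + B0 * R) - A * dB - R * B - R * dB" using key by simp
      also have "\<dots> = - ((A - m) * dB + R * (B - B0) + R * dB)" by (simp add: algebra_simps)
      finally show ?thesis .
    qed
    have p1: "pvg ((A - m) * dB) (int (Suc k) + 1)"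
      using pvg_mult[OF IA pdB] by (simp add: add.commute)
    have p2: "pvg (R * (B - B0)) (int (Suc k) + 1)"
      using pvg_mult[OF pR IB] by simp
    have p3: "pvg (R * dB) (int (Suc k) + 1)"
      using pvg_mult[OF pR pdB] by (rule pvg_mono) simp
    have e1: "pvg (g - (A + R) * (B + dB)) (int (Suc k) + 1)"
      unfolding newerr pvg_uminus by (rule pvg_add[OF pvg_add[OF p1 p2] p3])
    have e2: "pvg (A + R - m) 1"
      using pvg_add[OF IA pvg_mono[OF pR]] by (simp add: algebra_simps)
    have e3: "pvg (B + dB - B0) 1"
      using pvg_add[OF IB pvg_mono[OF pdB]] by (simp add: algebra_simps)
    have cR: "coeff R j = 0" if "j \<ge> s" for j
      using that unfolding R_def by (simp add: coeff_poly_cutoff)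
    have e4: "\<forall>j\<ge>s. coeff (A + R) j = coeff m j" using IcA cR by simp
    have degA: "degree A \<le> s"
      by (rule degree_le) (use IcA in \<open>auto simp: m_def coeff_monom\<close>)
    have degE: "degree E \<le> n"
    proof -
      have "degree (A * B) \<le> n"
        using degree_mult_le[of A B] degA IdB sn by linarith
      then show ?thesis unfolding E_def using dg degree_diff_le by blast
    qed
    have degdB: "degree dB \<le> n - s"
    proof (rule degree_le, intro allI impI)
      fix j assume j: "n - s < j"
      have "coeff (m * dB) (j + s) = coeff dB j" unfolding m_def by (simp add: coeff_monom_mult)
      moreover have "coeff E (j + s) = 0" using degE j sn by (simp add: coeff_eq_0)
      moreover have "coeff (B0 * R) (j + s) = 0"
        unfolding coeff_mult
      proof (rule sum.neutral, intro ballI)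
        fix i assume "i \<in> {..j + s}"
        show "coeff B0 i * coeff R (j + s - i) = 0"
        proof (cases "i \<le> n - s")
          case True then show ?thesis using j sn cR by simp
        next
          case False then show ?thesis using dB0 by (simp add: coeff_eq_0)
        qed
      qed
      ultimately show "coeff dB j = 0" using key
        by (metis add_diff_cancel_right' coeff_add diff_zero)
    qed
    have e5: "degree (B + dB) \<le> n - s"
      using degree_add_le[OF IdB degdB] .
    show ?thesis unfolding st Inv_def using e1 e2 e3 e4 e5 pR pdB by simp
  qed
  define sq where "sq = (\<lambda>k. (step ^^ k) (m, B0))"
  have Isq: "Inv k (sq k)" for k
  proof (induction k)
    case 0
    show ?case unfolding sq_def Inv_def using err dB0 m_def by simp
  next
    case (Suc k)
    obtain A B where AB: "sq k = (A, B)" by fastforce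
    have "sq (Suc k) = step (A, B)" unfolding sq_def using AB sq_def by simp
    then show ?case using stepI[of k A B] Suc AB by simp
  qed
  have dsq: "pvg (fst (sq (Suc k)) - fst (sq k)) (int k + 1) \<and>
      pvg (snd (sq (Suc k)) - snd (sq k)) (int k + 1)" for k
  proof -
    obtain A B where AB: "sq k = (A, B)" by fastforce
    have "sq (Suc k) = step (A, B)" unfolding sq_def using AB sq_def by simp
    then show ?thesis using stepI[of k A B] Isq[of k] AB by simp
  qed
  have degA: "degree (fst (sq k)) \<le> s" for k
  proof -
    obtain A B where AB: "sq k = (A, B)" by fastforce
    then have "\<forall>j\<ge>s. coeff A j = coeff m j" using Isq[of k] unfolding Inv_def by simp
    then have "degree A \<le> s"
      by (intro degree_le) (auto simp: m_def coeff_monom)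
    then show ?thesis using AB by simp
  qed
  have degB: "degree (snd (sq k)) \<le> n - s" for k
  proof -
    obtain A B where AB: "sq k = (A, B)" by fastforce
    then show ?thesis using Isq[of k] unfolding Inv_def by simp
  qed
  obtain A where A: "degree A \<le> s" "\<And>k. pvg (A - fst (sq k)) (int k + 1)"
    using poly_limit[of "\<lambda>k. fst (sq k)" s] dsq degA by blast
  obtain B where B: "degree B \<le> n - s" "\<And>k. pvg (B - snd (sq k)) (int k + 1)"
    using poly_limit[of "\<lambda>k. snd (sq k)" "n - s"] dsq degB by blast
  have Ik: "pvg (fst (sq k) - m) 1 \<and> pvg (snd (sq k) - B0) 1 \<and> pvg (g - fst (sq k) * snd (sq k)) (int k + 1)
     \<and> coeff (fst (sq k)) s = 1" for k
  proof -
    obtain A' B' where AB: "sq k = (A', B')" by fastforce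
    then show ?thesis using Isq[of k] unfolding Inv_def by (simp add: m_def)
  qed
  have pB: "pvg B 0"
  proof -
    have "B = (B - snd (sq 0)) + (snd (sq 0) - B0) + B0" by simp
    moreover have "pvg (B - snd (sq 0)) 0" using B(2)[of 0] by (rule pvg_mono) simp
    moreover have "pvg (snd (sq 0) - B0) 0" using Ik[of 0] by (auto intro: pvg_mono)
    ultimately show ?thesis using B00 by (metis pvg_add)
  qed
  have "pvg (g - A * B) (int k + 1)" for k
  proof -
    define Ak where "Ak = fst (sq k)"
    define Bk where "Bk = snd (sq k)"
    have pAk: "pvg Ak 0"
    proof -
      have "Ak = (Ak - m) + m" by simp
      moreover have "pvg (Ak - m) 0" using Ik[of k] Ak_def by (auto intro: pvg_mono)
      ultimately show ?thesis using m0 by (metis pvg_add)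
    qed
    have "g - A * B = (g - Ak * Bk) - (A - Ak) * B - Ak * (B - Bk)"
      by (simp add: algebra_simps)
    moreover have "pvg (g - Ak * Bk) (int k + 1)" using Ik[of k] Ak_def Bk_def by simp
    moreover have "pvg ((A - Ak) * B) (int k + 1)"
      using pvg_mult[OF A(2)[of k] pB] Ak_def by simp
    moreover have "pvg (Ak * (B - Bk)) (int k + 1)"
      using pvg_mult[OF pAk B(2)[of k]] Bk_def by simp
    ultimately show ?thesis by (metis pvg_diff)
  qed
  note F = this
  have "pvg (g - A * B) k" for k :: int
    using F[of "nat k"] by (rule pvg_mono) simp
  then have gAB: "g = A * B" using pvg_all[of "g - A * B"] by simp
  have "coeff A s - 1 = 0"
  proof (rule vg_all)
    fix k :: int
    have "val_ge v (coeff (A - fst (sq (nat k))) s) (int (nat k) + 1)"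
      using A(2) unfolding pvg_def by blast
    then have "val_ge v (coeff A s - 1) (int (nat k) + 1)" using Ik[of "nat k"] by simp
    then show "val_ge v (coeff A s - 1) k" by (rule vg_mono) simp
  qed
  then have "coeff A s \<noteq> 0" by simp
  then have "degree A = s" using A(1) le_degree by (metis antisym)
  then show ?thesis using gAB by blast
qed

end



lemma coeff_cpo: "coeff (char_poly_of n a) j = (if j = n then 1 else if j < n then a j else 0)"
  unfolding char_poly_of_def coeff_add coeff_sum coeff_monom
  by (auto simp: sum.delta)

lemma degree_cpo: "degree (char_poly_of n a) = n"
proof (rule antisym)
  show "degree (char_poly_of n a) \<le> n" by (rule degree_le) (simp add: coeff_cpo)
  show "n \<le> degree (char_poly_of n a)" by (rule le_degree) (simp add: coeff_cpo)
qed

context dvalc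
begin

lemma newton:
  assumes irr: "irreducible (char_poly_of n a)" and a0: "a 0 \<noteq> 0"
    and i: "i < n" and ai: "a i \<noteq> 0"
  shows "min (v (a 0)) 0 \<le> v (a i)"
proof (rule ccontr)
  assume neg: "\<not> ?thesis"
  define f where "f = char_poly_of n a"
  define c where "c = coeff f"
  have cf: "c j = (if j = n then 1 else if j < n then a j else 0)" for j
    unfolding c_def f_def by (rule coeff_cpo)
  define S where "S = {j. j \<le> n \<and> c j \<noteq> 0}"
  have finS: "finite S" unfolding S_def by simp
  have iS: "i \<in> S" using i ai cf unfolding S_def by simp
  define mu where "mu = Min ((\<lambda>j. v (c j)) ` S)"
  have mu_le: "mu \<le> v (c j)" if "j \<in> S" for j
    unfolding mu_def using finS that by simp
  have "c i = a i" using cf i by simp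
  then have mu_i: "mu < min (v (a 0)) 0" using mu_le[OF iS] neg by (simp add: min_def split: if_splits)
  define T where "T = {j \<in> S. v (c j) = mu}"
  have "mu \<in> (\<lambda>j. v (c j)) ` S" unfolding mu_def using finS iS by (intro Min_in) auto
  then have Tne: "T \<noteq> {}" unfolding T_def by auto
  have finT: "finite T" using finS unfolding T_def by simp
  define s where "s = Min T"
  have sT: "s \<in> T" unfolding s_def using Min_in[OF finT Tne] .
  have s_min: "s \<le> j" if "j \<in> T" for j unfolding s_def using finT that by simp
  have sS: "s \<in> S" and vs: "v (c s) = mu" using sT unfolding T_def by auto
  have cs0: "c s \<noteq> 0" using sS unfolding S_def by simp
  have s0: "s \<noteq> 0"
  proof
    assume "s = 0"
    then have "c s = a 0" using cf i by simp
    then show False using vs mu_i by simp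
  qed
  have sn: "s \<noteq> n"
  proof
    assume "s = n"
    then have "c s = 1" using cf by simp
    then show False using vs mu_i v1 by simp
  qed
  have sle: "s \<le> n" using sS unfolding S_def by simp
  define g where "g = smult (inverse (c s)) f"
  have cg: "coeff g j = inverse (c s) * c j" for j unfolding g_def c_def by simp
  have vcg: "val_ge v (coeff g j) (if j < s then 1 else 0)" for j
  proof (cases "c j = 0")
    case True then show ?thesis by (simp add: cg)
  next
    case False
    then have jS: "j \<in> S" unfolding S_def using cf by (auto split: if_splits)
    have vg: "v (coeff g j) = v (c j) - mu"
      using False cs0 vs by (simp add: cg vmult vinv)
    have "mu < v (c j)" if "j < s"
    proof -
      have "j \<notin> T" using s_min that by force
      then show ?thesis using mu_le[OF jS] jS unfolding T_def by auto
    qed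
    then show ?thesis using mu_le[OF jS] unfolding val_ge_def vg by (cases "j < s") simp_all
  qed
  have g0: "pvg g 0" unfolding pvg_def
  proof
    fix j show "val_ge v (coeff g j) 0" using vg_mono[OF vcg[of j], of 0] by simp
  qed
  have dg: "degree g \<le> n" unfolding g_def f_def by (simp add: degree_cpo)
  define B0 where "B0 = poly_shift s g"
  have B00: "pvg B0 0" unfolding B0_def by (rule pvg_shift[OF g0])
  have dB0: "degree B0 \<le> n - s"
    by (rule degree_le) (use dg in \<open>auto simp: B0_def coeff_poly_shift coeff_eq_0\<close>)
  have cB0: "coeff B0 0 = 1" unfolding B0_def coeff_poly_shift using cs0 by (simp add: cg)
  define B' where "B' = poly_shift 1 B0"
  define X :: "'a poly" where "X = monom 1 1"
  have "poly_cutoff 1 B0 = 1"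
    by (rule poly_eqI) (simp add: coeff_poly_cutoff cB0 coeff_1)
  then have B0eq: "B0 = 1 + X * B'" using cutoff_shift[of 1 B0] unfolding B'_def X_def by simp
  define Y where "Y = - (X * B')"
  define U where "U = (- B') ^ s"
  define V where "V = (\<Sum>j<s. Y ^ j)"
  have pB': "pvg B' 0" unfolding B'_def by (rule pvg_shift[OF B00])
  have pX: "pvg X 0" unfolding X_def by (rule pvg_monom[OF vg_one])
  have pY: "pvg Y 0" unfolding Y_def using pvg_mult[OF pX pB'] by simp
  have U0: "pvg U 0" unfolding U_def by (rule pvg_power) (simp add: pB')
  have V0: "pvg V 0" unfolding V_def by (rule pvg_sum) (rule pvg_power[OF pY])
  have Xs: "X ^ s = monom 1 s" unfolding X_def monom_power by simp
  have bez: "monom 1 s * U + B0 * V = 1"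
  proof -
    have "B0 * V = (1 - Y) * V" using B0eq Y_def by simp
    also have "\<dots> = 1 - Y ^ s" unfolding V_def by (rule one_diff_power_eq[symmetric])
    also have "Y ^ s = monom 1 s * U" unfolding Y_def U_def Xs[symmetric]
      by (simp add: power_mult_distrib[symmetric])
    finally show ?thesis by simp
  qed
  have err: "pvg (g - monom 1 s * B0) 1"
  proof -
    have "g - monom 1 s * B0 = poly_cutoff s g" using cutoff_shift[of s g] unfolding B0_def
      by (simp add: algebra_simps)
    moreover have "val_ge v (coeff (poly_cutoff s g) j) 1" for j
      using vcg[of j] by (cases "j < s") (simp_all add: coeff_poly_cutoff)
    ultimately show ?thesis unfolding pvg_def by simp
  qed
  obtain A B where gAB: "g = A * B" and dA: "degree A = s"
    using hensel[OF g0 dg sle B00 dB0 U0 V0 bez err] by blast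
  have "smult (c s) g = f" unfolding g_def using cs0 by simp
  then have fAB: "f = A * smult (c s) B" using gAB by (simp add: mult_smult_right)
  have fn0: "f \<noteq> 0" using degree_cpo[of n a] i unfolding f_def by auto
  then have A0: "A \<noteq> 0" and B0': "smult (c s) B \<noteq> 0" using fAB by auto
  have "degree f = n" unfolding f_def by (rule degree_cpo)
  then have dsum: "s + degree (smult (c s) B) = n" using fAB degree_mult_eq[OF A0 B0'] dA by simp
  have "A dvd 1 \<or> smult (c s) B dvd 1" using irr fAB unfolding f_def by (rule irreducibleD)
  then show False
  proof
    assume "A dvd 1" then have "degree A = 0" using is_unit_iff_degree[OF A0] by simp
    then show False using dA s0 by simp
  next
    assume "smult (c s) B dvd 1" then have "degree (smult (c s) B) = 0"
      using is_unit_iff_degree[OF B0'] by simp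
    then show False using dsum sn by simp
  qed
qed

end



lemma a1: "1 \<le> (fr::int) \<Longrightarrow> fr \<le> int n \<Longrightarrow> 1 \<le> int n div fr"
  using zdiv_mono1[of fr "int n" fr] by simp
lemma a2: "1 \<le> (fr::int) \<Longrightarrow> (x::int) div fr * fr \<le> x"
  using div_mult_mod_eq[of x fr] pos_mod_sign[of fr x] by linarith
lemma a3: assumes "1 \<le> (fr::int)" "(e::nat) = nat (int n div fr)" "1 \<le> e"
  shows "int m * fr \<le> int (m * n div e)"
proof -
  define q where "q = int n div fr"
  have q: "int e = q" "1 \<le> q" using assms q_def by auto
  have "q * fr \<le> int n" using a2[OF assms(1)] q_def by (simp add: mult.commute)
  then have "int m * fr * q \<le> int m * int n" using assms(1)
    by (metis mult.assoc mult.commute mult_left_mono of_nat_0_le_iff)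
  then have "(int m * fr * q) div q \<le> (int m * int n) div q" using q by (intro zdiv_mono1) auto
  moreover have "(int m * fr * q) div q = int m * fr" using q by simp
  moreover have "int (m * n div e) = (int m * int n) div q" using q by (simp add: zdiv_int)
  ultimately show ?thesis by simp
qed

lemma n_pos: assumes "irreducible (char_poly_of n a)" shows "0 < n"
proof (rule ccontr)
  assume "\<not> 0 < n"
  then have "char_poly_of n a = 1" unfolding char_poly_of_def by simp
  then show False using assms by simp
qed

lemma a0_zero:
  fixes a :: "nat \<Rightarrow> 'a::field"
  assumes irr: "irreducible (char_poly_of n a)" and a0: "a 0 = 0" shows "n = 1"
proof -
  define f where "f = char_poly_of n a"
  have n0: "0 < n" using n_pos[OF irr] .
  have "poly_cutoff 1 f = 0"
    by (rule poly_eqI) (use n0 a0 in \<open>simp add: coeff_poly_cutoff f_def coeff_cpo\<close>)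
  then have fX: "f = monom 1 1 * poly_shift 1 f" using cutoff_shift[of 1 f] by simp
  have "\<not> is_unit (monom 1 1 :: 'a poly)"
    using is_unit_iff_degree[of "monom 1 1 :: 'a poly"] by (simp add: degree_monom_eq)
  then have "is_unit (poly_shift 1 f)" using irreducibleD[OF irr[folded f_def] fX] by blast
  then have ps0: "poly_shift 1 f \<noteq> 0" by auto
  have "degree (poly_shift 1 f) = 0"
    using is_unit_iff_degree[OF ps0] \<open>is_unit (poly_shift 1 f)\<close> by simp
  moreover have "degree (monom 1 1 * poly_shift 1 f) = degree (monom 1 1 :: 'a poly) + degree (poly_shift 1 f)"
    by (rule degree_mult_eq) (use ps0 in auto)
  ultimately have "degree f = 1" using fX by (simp add: degree_monom_eq)
  then show ?thesis unfolding f_def degree_cpo .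
qed

lemma det_companion:
  fixes a :: "nat \<Rightarrow> 'a::comm_ring_1"
  assumes n: "0 < n"
  shows "det (companion n a) = - a 0 * (-1) ^ (n - 1)"
proof -
  define B where "B = companion n a"
  have Bc: "B \<in> carrier_mat n n" unfolding B_def companion_def by simp
  have "det B = (\<Sum>j<n. B $$ (0, j) * cofactor B 0 j)"
    by (rule laplace_expansion_row[OF Bc n])
  also have "\<dots> = B $$ (0, n - 1) * cofactor B 0 (n - 1)"
  proof -
    have "(\<Sum>j<n. B $$ (0, j) * cofactor B 0 j) =
      (\<Sum>j<n. if j = n - 1 then B $$ (0, n - 1) * cofactor B 0 (n - 1) else 0)"
      by (rule sum.cong) (auto simp: B_def companion_def)
    then show ?thesis using n by simp
  qed
  also have "mat_delete B 0 (n - 1) = 1\<^sub>m (n - 1)"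
    by (rule eq_matI) (auto simp: mat_delete_def B_def companion_def)
  then have "cofactor B 0 (n - 1) = (-1) ^ (n - 1)" unfolding cofactor_def by simp
  finally show ?thesis using n unfolding B_def by (simp add: companion_def)
qed

context dval
begin

lemma res_deg_bounds:
  assumes n: "0 < n" and Bc: "B \<in> carrier_mat n n"
  shows "1 \<le> res_deg v n B \<and> res_deg v n B \<le> int n"
proof -
  define P where "P = (\<lambda>k::int. 0 < k \<and> (\<exists>x\<in>field_E n B. x \<noteq> 0\<^sub>m n n \<and> v (det x) = k))"
  define x where "x = poly_at n n (\<lambda>j. if j = 0 then unif else 0) B"
  have x: "x = unif \<cdot>\<^sub>m 1\<^sub>m n"
  proof (rule eq_matI)
    fix i k assume ik: "i < dim_row (unif \<cdot>\<^sub>m 1\<^sub>m n)" "k < dim_col (unif \<cdot>\<^sub>m 1\<^sub>m n)"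
    have "(\<Sum>j<n. (if j = 0 then unif else 0) * (B ^\<^sub>m j) $$ (i, k)) =
        (\<Sum>j<n. if j = 0 then unif * (B ^\<^sub>m 0) $$ (i, k) else 0)"
      by (rule sum.cong) auto
    also have "\<dots> = unif * (B ^\<^sub>m 0) $$ (i, k)" using n by simp
    finally show "x $$ (i, k) = (unif \<cdot>\<^sub>m 1\<^sub>m n) $$ (i, k)"
      using ik Bc unfolding x_def poly_at_def by simp
  qed (auto simp: x_def poly_at_def)
  have xE: "x \<in> field_E n B" unfolding field_E_def x_def by blast
  have xn0: "x \<noteq> 0\<^sub>m n n"
  proof
    assume "x = 0\<^sub>m n n"
    then have "x $$ (0, 0) = 0" using n by simp
    then show False using x n vunif by simp
  qed
  have "v (det x) = int n" using x vunif by (simp add: vpow)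
  then have Pn: "P (int n)" unfolding P_def using xE xn0 n by auto
  define k0 where "k0 = (LEAST j::nat. P (int j))"
  have Pk0: "P (int k0)" unfolding k0_def by (rule LeastI[of _ n]) (use Pn in simp)
  have k0n: "k0 \<le> n" unfolding k0_def by (rule Least_le) (use Pn in simp)
  have least: "int k0 \<le> y" if "P y" for y
  proof -
    have "0 < y" using that unfolding P_def by simp
    then have "P (int (nat y))" using that by simp
    then have "k0 \<le> nat y" unfolding k0_def by (rule Least_le)
    then show ?thesis using \<open>0 < y\<close> by simp
  qed
  have "(LEAST k. P k) = int k0" by (rule Least_equality) (use Pk0 least in auto)
  then have "res_deg v n B = int k0" unfolding res_deg_def P_def by simp
  moreover have "0 < int k0" using Pk0 unfolding P_def by simp
  ultimately show ?thesis using k0n by simp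
qed

lemma conj_entry:
  assumes g: "g \<in> carrier_mat n n" and i: "i < n" and j: "j < n"
  shows "(Sigma_mat n u * g * Sigma_inv n u) $$ (i, j) = u ^ (n - 1 - i) * g $$ (i, j) * inverse u ^ (n - 1 - j)"
proof -
  have Sc: "Sigma_mat n u \<in> carrier_mat n n" "Sigma_inv n u \<in> carrier_mat n n"
    by (auto simp: Sigma_mat_def Sigma_inv_def)
  have e1: "(Sigma_mat n u * g) $$ (i, k) = u ^ (n - 1 - i) * g $$ (i, k)" if k: "k < n" for k
  proof -
    have "(Sigma_mat n u * g) $$ (i, k) = (\<Sum>l<n. Sigma_mat n u $$ (i, l) * g $$ (l, k))"
      using Sc g i k by (simp add: scalar_prod_def lessThan_atLeast0)
    also have "\<dots> = (\<Sum>l<n. if l = i then u ^ (n - 1 - i) * g $$ (i, k) else 0)"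
      by (rule sum.cong) (use i in \<open>auto simp: Sigma_mat_def\<close>)
    also have "\<dots> = u ^ (n - 1 - i) * g $$ (i, k)" using i by simp
    finally show ?thesis .
  qed
  define G where "G = Sigma_mat n u * g"
  have Gc: "G \<in> carrier_mat n n" unfolding G_def using Sc g by simp
  have "(G * Sigma_inv n u) $$ (i, j) = (\<Sum>l<n. G $$ (i, l) * Sigma_inv n u $$ (l, j))"
    using Sc Gc i j by (simp add: scalar_prod_def lessThan_atLeast0)
  then have "(Sigma_mat n u * g * Sigma_inv n u) $$ (i, j) =
      (\<Sum>l<n. (Sigma_mat n u * g) $$ (i, l) * Sigma_inv n u $$ (l, j))"
    unfolding G_def .
  also have "\<dots> = (\<Sum>l<n. if l = j then u ^ (n - 1 - i) * g $$ (i, j) * inverse u ^ (n - 1 - j) else 0)"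
    by (rule sum.cong) (use j e1 in \<open>auto simp: Sigma_inv_def\<close>)
  also have "\<dots> = u ^ (n - 1 - i) * g $$ (i, j) * inverse u ^ (n - 1 - j)" using j by simp
  finally show ?thesis .
qed

lemma vg_unif_pow: "val_ge v (unif ^ k) (int k)"
  using vunif by (simp add: val_ge_def vpow)

lemma vg_inv_pow: "val_ge v (inverse unif ^ k) (- int k)"
  using vunif by (simp add: val_ge_def vpow vinv)

end




theorem lemma6p3:
  fixes v :: "'a::field \<Rightarrow> int" and unif :: 'a and p :: nat
    and psi :: "'a \<Rightarrow> 'c::field"
    and n m :: nat and a :: "nat \<Rightarrow> 'a"
  assumes F: "nonarch_local_field v unif"
    and p: "residue_char v p"
    and R: "alg_closed TYPE('c)"
    and ell: "(of_nat p :: 'c) \<noteq> 0"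
    and psi: "level_one_char v psi"
    and irr: "irreducible (char_poly_of n a)"
    and m1: "1 \<le> m"
    and val_beta: "val_E v n (companion n a) (companion n a) = - int m"
    and cop: "coprime m (ram_index v n (companion n a))"
    and gen: "residue_generates v n (companion n a)
               (unif ^ m \<cdot>\<^sub>m (companion n a ^\<^sub>m ram_index v n (companion n a)))"
  shows "\<forall>x \<in> unit_U (lattice_E v n (companion n a)) n (m div 2 + 1) \<inter>
              {Sigma_mat n unif * g * Sigma_inv n unif | g.
                 g \<in> K_mirabolic v n (n + m * n div ram_index v n (companion n a))}.
           psi (mat_trace (companion n a * (x - 1\<^sub>m n))) = 1"
proof
  interpret dvalc v unif
    using F by unfold_locales (auto simp: nonarch_local_field_def)
  define B where "B = companion n a"
  have n0: "0 < n" using n_pos[OF irr] .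
  have Bc: "B \<in> carrier_mat n n" unfolding B_def companion_def by simp
  define fr where "fr = res_deg v n B"
  have fr: "1 \<le> fr" "fr \<le> int n" using res_deg_bounds[OF n0 Bc] fr_def by auto
  define e where "e = ram_index v n B"
  have e_def': "e = nat (int n div fr)" unfolding e_def ram_index_def fr_def ..
  have e1: "1 \<le> e" using a1[OF fr] unfolding e_def' by simp
  define M where "M = m * n div e"
  have mfrM: "int m * fr \<le> int M" unfolding M_def by (rule a3[OF fr(1) e_def' e1])
  have vdetB: "- (int m * fr) \<le> v (det B)"
  proof -
    have "v (det B) div fr = - int m" using val_beta unfolding val_E_def B_def fr_def .
    moreover have "v (det B) div fr * fr \<le> v (det B)" using a2[OF fr(1)] .
    ultimately show ?thesis by simp
  qed
  have abound: "val_ge v (a i) (- int M)" if i: "i < n" for i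
  proof (cases "a i = 0")
    case True then show ?thesis by simp
  next
    case False
    show ?thesis
    proof (cases "a 0 = 0")
      case True
      then have "n = 1" by (rule a0_zero[OF irr])
      then show ?thesis using i True False by simp
    next
      case a0: False
      have "v ((-1) ^ (n - 1) :: 'a) = 0" using vpow[of "-1" "n - 1"] vneg1 by simp
      moreover have "det B = - a 0 * (-1) ^ (n - 1)" unfolding B_def by (rule det_companion[OF n0])
      ultimately have "v (det B) = v (a 0)" using a0 by (simp add: vmult vuminus)
      moreover have "min (v (a 0)) 0 \<le> v (a i)" by (rule newton[OF irr a0 i False])
      moreover have "0 \<le> int m * fr" using fr by simp
      ultimately have "- int M \<le> v (a i)" using vdetB mfrM by linarith
      then show ?thesis unfolding val_ge_def by simp
    qed
  qed
  fix x
  assume "x \<in> unit_U (lattice_E v n (companion n a)) n (m div 2 + 1) \<inter>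
              {Sigma_mat n unif * g * Sigma_inv n unif | g.
                 g \<in> K_mirabolic v n (n + m * n div ram_index v n (companion n a))}"
  then obtain g where xg: "x = Sigma_mat n unif * g * Sigma_inv n unif"
    and gK: "g \<in> K_mirabolic v n (n + M)"
    unfolding M_def e_def B_def by blast
  have gc: "g \<in> carrier_mat n n" and gint: "\<And>i j. i < n \<Longrightarrow> j < n \<Longrightarrow> val_ge v (g $$ (i, j)) 0"
    and glast: "\<And>j. j < n - 1 \<Longrightarrow> val_ge v (g $$ (n - 1, j)) (int (n + M))"
    and gdiag: "val_ge v (g $$ (n - 1, n - 1) - 1) (int (n + M))"
    using gK unfolding K_mirabolic_def GL_O_def by auto
  have Sc: "Sigma_mat n unif \<in> carrier_mat n n" "Sigma_inv n unif \<in> carrier_mat n n"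
    by (auto simp: Sigma_mat_def Sigma_inv_def)
  have xc: "x \<in> carrier_mat n n" unfolding xg using gc Sc by (meson mult_carrier_mat)
  have xe: "x $$ (i, j) = unif ^ (n - 1 - i) * g $$ (i, j) * inverse unif ^ (n - 1 - j)"
    if "i < n" "j < n" for i j
    unfolding xg by (rule conj_entry[OF gc that])
  have Be: "B $$ (i, k) = (if i = k + 1 then 1 else if k = n - 1 then - a i else 0)"
    if "i < n" "k < n" for i k
    using that unfolding B_def companion_def by simp
  have trm: "val_ge v (B $$ (i, k) * (x - 1\<^sub>m n) $$ (k, i)) 1" if ik: "i < n" "k < n" for i k
  proof -
    have ye: "(x - 1\<^sub>m n) $$ (k, i) = x $$ (k, i) - (if k = i then 1 else 0)"
      using ik xc by simp
    show ?thesis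
    proof (cases "i = k + 1")
      case True
      define t where "t = n - 1 - i"
      have kt: "n - 1 - k = Suc t" using True ik unfolding t_def by simp
      have "x $$ (k, i) = unif * g $$ (k, i) * (unif ^ t * inverse unif ^ t)"
        unfolding xe[OF ik(2) ik(1)] kt t_def[symmetric] by (simp add: algebra_simps)
      also have "\<dots> = unif * g $$ (k, i)" using vunif by (simp add: power_inverse)
      finally have "x $$ (k, i) = unif * g $$ (k, i)" .
      moreover have "val_ge v (unif * g $$ (k, i)) (1 + 0)"
        by (rule vg_mult[OF _ gint[OF ik(2) ik(1)]]) (use vg_unif_pow[of 1] in simp)
      ultimately show ?thesis using True ye Be[OF ik] by simp
    next
      case False
      show ?thesis
      proof (cases "k = n - 1")
        case False2: True
        have yv: "val_ge v ((x - 1\<^sub>m n) $$ (k, i)) (int M + 1)"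
        proof (cases "i = n - 1")
          case True
          have "(x - 1\<^sub>m n) $$ (k, i) = g $$ (n - 1, n - 1) - 1"
            using ye xe[OF ik(2) ik(1)] True False2 by simp
          then show ?thesis using vg_mono[OF gdiag, of "int M + 1"] n0 by simp
        next
          case ni: False
          then have ilt: "i < n - 1" using ik by simp
          have "(x - 1\<^sub>m n) $$ (k, i) = g $$ (n - 1, i) * inverse unif ^ (n - 1 - i)"
            using ye xe[OF ik(2) ik(1)] ni False2 by simp
          moreover have "val_ge v (g $$ (n - 1, i) * inverse unif ^ (n - 1 - i))
              (int (n + M) + - int (n - 1 - i))"
            by (rule vg_mult[OF glast[OF ilt] vg_inv_pow])
          ultimately show ?thesis by (rule_tac vg_mono) (use ilt in auto)
        qed
        have "val_ge v (- a i * (x - 1\<^sub>m n) $$ (k, i)) (- int M + (int M + 1))"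
          by (rule vg_mult[OF _ yv]) (simp add: abound[OF ik(1)])
        then show ?thesis using Be[OF ik] False False2 by simp
      next
        case False3: False
        then show ?thesis using Be[OF ik] False by simp
      qed
    qed
  qed
  have tr: "mat_trace (B * (x - 1\<^sub>m n)) = (\<Sum>i<n. \<Sum>k<n. B $$ (i, k) * (x - 1\<^sub>m n) $$ (k, i))"
    unfolding mat_trace_def using Bc xc by (simp add: scalar_prod_def lessThan_atLeast0)
  have "val_ge v (mat_trace (B * (x - 1\<^sub>m n))) 1"
    unfolding tr by (intro vg_sum) (use trm in auto)
  then show "psi (mat_trace (companion n a * (x - 1\<^sub>m n))) = 1"
    using psi unfolding level_one_char_def B_def by blast
qed


end
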